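(* Let $p>1$, $s\ge r\ge2$, let $Q$ be an $s$-vertex $r$-graph and let $H$ be an $n$-vertex $r$-graph ($n\ge s$) with $\lambda=\lambda^{(p)}(Q,H)$ and minimum $Q$-degree $\delta=\delta_Q(H)$. Let $\mathbf x$ be a principal $Q$-eigenvector of $H$. Then $$\Big(\frac{\lambda\,(\mathbf x_{\min})^{p-1}}{(s-1)!}\Big)^{p}\le\frac{s!\binom{n}{s-1}\delta^{p-1}}{n^{s-1}}-\Big(s!\tbinom{n}{s-1}\delta^{p-1}-\delta^{p}\Big)(\mathbf x_{\min})^{p(s-1)}.$$
   Context: An $r$-graph ($r\ge 2$) is a finite hypergraph all of whose edges have exactly $r$ vertices. For $I\subseteq V(H)$, $H[I]$ denotes the induced subhypergraph on $I$. For an $s$-vertex $r$-graph $Q$ and an $r$-graph $H$, $\mathcal N(Q,H)$ is the number of (not necessarily induced) subgraphs of $H$ isomorphic to $Q$. For an $n$-vertex $r$-graph $H$ with vertex set $[n]$ and $\mathbf x\in\mathbb R^n$, $P_{Q,H}(\mathbf x)=s!\sum_{\{i_1,\dots,i_s\}\in\binom{[n]}{s}}\mathcal N(Q,H[\{i_1,\dots,i_s\}])\,x_{i_1}\cdots x_{i_s}$, and for $p\ge1$, $\lambda^{(p)}(Q,H)=\max_{\|\mathbf x\|_p=1}P_{Q,H}(\mathbf x)$. A principal $Q$-eigenvector of $H$ is a nonnegative vector $\mathbf x$ with $\|\mathbf x\|_p=1$ and $P_{Q,H}(\mathbf x)=\lambda^{(p)}(Q,H)$; $\mathbf x_{\min}$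 denotes its smallest entry. The $Q$-degree of a vertex $v$ is $d_{Q,H}(v)=\sum\mathcal N(Q,H[I])$, the sum over all $s$-subsets $I\subseteq V(H)$ containing $v$; $\delta_Q(H)$ is the minimum $Q$-degree over all vertices. *)

theory Defs
  imports Complex_Main
begin

text \<open>An r-graph is represented by its vertex set V and edge set E (a set of r-subsets of V).
  The host graph H has vertex set {..<n}; the pattern Q has vertex set {..<s}.\<close>

definition is_rgraph :: "nat \<Rightarrow> 'a set \<Rightarrow> 'a set set \<Rightarrow> bool" where
  "is_rgraph r V E \<longleftrightarrow> finite V \<and> (\<forall>e\<in>E. e \<subseteq> V \<and> card e = r)"

definition induced_edges :: "'a set set \<Rightarrow> 'a set \<Rightarrow> 'a set set" where
  "induced_edges E I = {e \<in> E. e \<subseteq> I}"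

text \<open>Number of (not necessarily induced) subgraphs (V',E') of the hypergraph (V,E)
  isomorphic to the s-vertex r-graph Q = ({..<s}, EQ).\<close>
definition num_copies :: "nat \<Rightarrow> nat set set \<Rightarrow> 'a set \<Rightarrow> 'a set set \<Rightarrow> nat" where
  "num_copies s EQ V E = card {(V', E'). V' \<subseteq> V \<and> E' \<subseteq> E \<and> (\<forall>e\<in>E'. e \<subseteq> V') \<and>
      (\<exists>f. bij_betw f {..<s} V' \<and> E' = (\<lambda>e. f ` e) ` EQ)}"

definition Qpoly :: "nat \<Rightarrow> nat set set \<Rightarrow> nat \<Rightarrow> nat set set \<Rightarrow> (nat \<Rightarrow> real) \<Rightarrow> real" where
  "Qpoly s EQ n EH x = fact s * (\<Sum>I\<in>{I. I \<subseteq> {..<n} \<and> card I = s}.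
      real (num_copies s EQ I (induced_edges EH I)) * (\<Prod>i\<in>I. x i))"

definition pnorm :: "real \<Rightarrow> nat \<Rightarrow> (nat \<Rightarrow> real) \<Rightarrow> real" where
  "pnorm p n x = (\<Sum>i<n. \<bar>x i\<bar> powr p) powr (1 / p)"

text \<open>The p-spectral radius \<lambda>^{(p)}(Q,H) (maximum over the unit p-sphere in R^n;
  entries of x outside {..<n} do not influence Qpoly).\<close>
definition Qlambda :: "real \<Rightarrow> nat \<Rightarrow> nat set set \<Rightarrow> nat \<Rightarrow> nat set set \<Rightarrow> real" where
  "Qlambda p s EQ n EH = (SUP x\<in>{x. pnorm p n x = 1}. Qpoly s EQ n EH x)"

definition principal_Qeigvec :: "real \<Rightarrow> nat \<Rightarrow> nat set set \<Rightarrow> nat \<Rightarrow> nat set set \<Rightarrow> (nat \<Rightarrow> real) \<Rightarrow> bool" where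
  "principal_Qeigvec p s EQ n EH x \<longleftrightarrow> (\<forall>i<n. 0 \<le> x i) \<and> pnorm p n x = 1 \<and>
      Qpoly s EQ n EH x = Qlambda p s EQ n EH"

definition Qdegree :: "nat \<Rightarrow> nat set set \<Rightarrow> nat \<Rightarrow> nat set set \<Rightarrow> nat \<Rightarrow> nat" where
  "Qdegree s EQ n EH v = (\<Sum>I\<in>{I. I \<subseteq> {..<n} \<and> card I = s \<and> v \<in> I}.
      num_copies s EQ I (induced_edges EH I))"

definition min_Qdegree :: "nat \<Rightarrow> nat set set \<Rightarrow> nat \<Rightarrow> nat set set \<Rightarrow> nat" where
  "min_Qdegree s EQ n EH = Min (Qdegree s EQ n EH ` {..<n})"

end

theory Submission
  imports Defs "HOL-Analysis.Analysis"
begin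


lemma tangent_powr:
  fixes p z Z :: real
  assumes "p > 1" "z \<ge> 0" "Z \<ge> 0"
  shows "p * Z powr (p - 1) * z \<le> z powr p + (p - 1) * Z powr p"
proof -
  define q where "q = p / (p - 1)"
  have q1: "q > 1" using assms by (simp add: q_def)
  have pq: "1/p + 1/q = 1" using assms by (simp add: q_def field_simps)
  have "z * Z powr (p - 1) \<le> z powr p / p + (Z powr (p - 1)) powr q / q"
    using Youngs_inequality[OF assms(1) q1 pq assms(2)] by simp
  also have "(Z powr (p - 1)) powr q = Z powr p"
    using assms by (simp add: powr_powr q_def)
  finally have "z * Z powr (p - 1) \<le> z powr p / p + Z powr p / q" .
  then have "p * (z * Z powr (p - 1)) \<le> p * (z powr p / p + Z powr p / q)"
    using assms by simp
  also have "\<dots> = z powr p + (p - 1) * Z powr p"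
    using assms by (simp add: q_def field_simps)
  finally show ?thesis by (simp add: mult_ac)
qed

lemma powr_minus_one_mult:
  fixes C p :: real
  assumes "C \<ge> 0"
  shows "C powr (p - 1) * C = C powr p"
proof (cases "C = 0")
  case False
  then have "C > 0" using assms by simp
  then show ?thesis by (simp add: powr_diff)
qed simp

lemma power_mean:
  fixes c z :: "'a \<Rightarrow> real" and p :: real
  assumes "finite A" "p > 1" "\<And>i. i \<in> A \<Longrightarrow> c i \<ge> 0" "\<And>i. i \<in> A \<Longrightarrow> z i \<ge> 0"
  shows "(\<Sum>i\<in>A. c i * z i) powr p \<le> (\<Sum>i\<in>A. c i) powr (p - 1) * (\<Sum>i\<in>A. c i * z i powr p)"
proof -
  define C where "C = (\<Sum>i\<in>A. c i)"
  define T where "T = (\<Sum>i\<in>A. c i * z i)"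
  define U where "U = (\<Sum>i\<in>A. c i * z i powr p)"
  have C0: "C \<ge> 0" unfolding C_def using assms by (simp add: sum_nonneg)
  have T0: "T \<ge> 0" unfolding T_def using assms by (simp add: sum_nonneg)
  show ?thesis
  proof (cases "C = 0")
    case True
    have "\<forall>i\<in>A. c i = 0" using sum_nonneg_eq_0_iff[OF assms(1), of c] assms(3) True
      unfolding C_def by simp
    then show ?thesis by simp
  next
    case False
    then have Cp: "C > 0" using C0 by simp
    define Z where "Z = T / C"
    have Z0: "Z \<ge> 0" using T0 Cp by (simp add: Z_def)
    define K where "K = (p - 1) * Z powr p"
    define L where "L = p * Z powr (p - 1)"
    have "(\<Sum>i\<in>A. c i * (L * z i)) \<le> (\<Sum>i\<in>A. c i * (z i powr p + K))"
      unfolding L_def K_def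
      by (intro sum_mono mult_left_mono tangent_powr) (use assms Z0 in auto)
    moreover have "(\<Sum>i\<in>A. c i * (L * z i)) = L * T"
      unfolding T_def sum_distrib_left by (rule sum.cong) (simp_all add: mult_ac)
    moreover have "(\<Sum>i\<in>A. c i * (z i powr p + K)) = U + K * C"
    proof -
      have "(\<Sum>i\<in>A. c i * (z i powr p + K)) = (\<Sum>i\<in>A. c i * z i powr p + K * c i)"
        by (rule sum.cong) (simp_all add: distrib_left mult_ac)
      also have "\<dots> = U + (\<Sum>i\<in>A. K * c i)" unfolding U_def by (rule sum.distrib)
      also have "(\<Sum>i\<in>A. K * c i) = K * C" unfolding C_def by (rule sum_distrib_left[symmetric])
      finally show ?thesis .
    qed
    ultimately have LT: "L * T \<le> U + K * C" by linarith
    have ZT: "Z powr (p - 1) * T = Z powr p * C"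
    proof -
      have "T = Z * C" using Cp by (simp add: Z_def)
      then have "Z powr (p - 1) * T = (Z powr (p - 1) * Z) * C" by (simp add: mult_ac)
      also have "\<dots> = Z powr p * C" using powr_minus_one_mult[OF Z0] by simp
      finally show ?thesis .
    qed
    have key: "C * Z powr p \<le> U"
    proof -
      have "L * T = p * (Z powr p * C)" unfolding L_def using ZT by (simp add: mult.assoc)
      then have "p * (Z powr p * C) \<le> U + (p - 1) * (Z powr p * C)" using LT unfolding K_def
        by (simp add: mult.assoc)
      then show ?thesis by (simp add: algebra_simps)
    qed
    have "T = C * Z" using Cp by (simp add: Z_def)
    then have "T powr p = C powr p * Z powr p" using Cp Z0 by (simp add: powr_mult)
    also have "\<dots> = C powr (p - 1) * (C * Z powr p)"
      using powr_minus_one_mult[OF C0, of p] by (simp add: mult.assoc)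
    also have "\<dots> \<le> C powr (p - 1) * U"
      by (intro mult_left_mono key) simp
    finally show ?thesis by (simp add: T_def C_def U_def)
  qed
qed

lemma tangent_pow:
  fixes a h :: real
  assumes "a \<ge> 0" "a + h \<ge> 0"
  shows "a ^ k * (a + real (Suc k) * h) \<le> (a + h) ^ Suc k"
proof (induction k)
  case 0 then show ?case by simp
next
  case (Suc k)
  have "a ^ Suc k * (a + real (Suc (Suc k)) * h) \<le> (a + h) * (a ^ k * (a + real (Suc k) * h))"
  proof -
    have "(a + h) * (a ^ k * (a + real (Suc k) * h)) - a ^ Suc k * (a + real (Suc (Suc k)) * h)
        = a ^ k * (real (Suc k) * h^2)" by (simp add: algebra_simps power2_eq_square)
    moreover have "a ^ k * (real (Suc k) * h^2) \<ge> 0" using assms by simp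
    ultimately show ?thesis by linarith
  qed
  also have "\<dots> \<le> (a + h) * (a + h) ^ Suc k"
    by (intro mult_left_mono Suc.IH assms)
  finally show ?case by simp
qed




definition esym :: "'a set \<Rightarrow> nat \<Rightarrow> ('a \<Rightarrow> real) \<Rightarrow> real" where
  "esym V k y = (\<Sum>J\<in>{J. J \<subseteq> V \<and> card J = k}. \<Prod>j\<in>J. y j)"

lemma subsets_insert_Suc:
  assumes "finite F" "v \<notin> F"
  shows "{J. J \<subseteq> insert v F \<and> card J = Suc j} =
     {J. J \<subseteq> F \<and> card J = Suc j} \<union> insert v ` {J. J \<subseteq> F \<and> card J = j}"
proof (intro equalityI subsetI)
  fix J assume J: "J \<in> {J. J \<subseteq> insert v F \<and> card J = Suc j}"
  show "J \<in> {J. J \<subseteq> F \<and> card J = Suc j} \<union> insert v ` {J. J \<subseteq> F \<and> card J = j}"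
  proof (cases "v \<in> J")
    case True
    have fJ: "finite J" using J assms finite_subset by blast
    have "J = insert v (J - {v})" using True by blast
    moreover have "card (J - {v}) = j" using J True fJ by simp
    moreover have "J - {v} \<subseteq> F" using J by blast
    ultimately show ?thesis by blast
  next
    case False then show ?thesis using J by blast
  qed
next
  fix J assume "J \<in> {J. J \<subseteq> F \<and> card J = Suc j} \<union> insert v ` {J. J \<subseteq> F \<and> card J = j}"
  then show "J \<in> {J. J \<subseteq> insert v F \<and> card J = Suc j}"
  proof
    assume "J \<in> insert v ` {J. J \<subseteq> F \<and> card J = j}"
    then obtain K where K: "K \<subseteq> F" "card K = j" "J = insert v K" by blast
    have "finite K" using K assms finite_subset by blast
    moreover have "v \<notin> K" using K assms by blast
    ultimately show ?thesis using K assms by auto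
  qed auto
qed

lemma esym_insert:
  assumes "finite F" "v \<notin> F"
  shows "esym (insert v F) (Suc j) y = esym F (Suc j) y + y v * esym F j y"
proof -
  let ?A = "{J. J \<subseteq> F \<and> card J = Suc j}"
  let ?B = "{J. J \<subseteq> F \<and> card J = j}"
  have disj: "?A \<inter> insert v ` ?B = {}"
    using assms by blast
  have inj: "inj_on (insert v) ?B"
  proof (rule inj_onI)
    fix X Y assume X: "X \<in> ?B" and Y: "Y \<in> ?B" and e: "insert v X = insert v Y"
    have "v \<notin> X" "v \<notin> Y" using X Y assms by blast+
    then have "X = insert v X - {v}" "Y = insert v Y - {v}" by blast+
    then show "X = Y" using e by simp
  qed
  have fin1: "finite ?A" by (rule finite_subset[of _ "Pow F"]) (use assms in auto)
  have fin0: "finite ?B" by (rule finite_subset[of _ "Pow F"]) (use assms in auto)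
  have fin2: "finite (insert v ` ?B)" by (rule finite_imageI[OF fin0])
  have s1: "esym (insert v F) (Suc j) y = esym F (Suc j) y +
      (\<Sum>J\<in>insert v ` ?B. \<Prod>i\<in>J. y i)"
    unfolding esym_def subsets_insert_Suc[OF assms]
    by (rule sum.union_disjoint[OF fin1 fin2 disj])
  have s2: "(\<Sum>J\<in>insert v ` ?B. \<Prod>i\<in>J. y i) = (\<Sum>J\<in>?B. \<Prod>i\<in>insert v J. y i)"
    by (rule sum.reindex[OF inj, unfolded comp_def])
  have s3: "(\<Sum>J\<in>?B. \<Prod>i\<in>insert v J. y i) = (\<Sum>J\<in>?B. y v * (\<Prod>i\<in>J. y i))"
  proof (rule sum.cong)
    fix J assume "J \<in> ?B"
    then have "finite J" "v \<notin> J" using assms finite_subset by blast+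
    then show "(\<Prod>i\<in>insert v J. y i) = y v * (\<Prod>i\<in>J. y i)" by simp
  qed (rule refl)
  have s4: "(\<Sum>J\<in>?B. y v * (\<Prod>i\<in>J. y i)) = y v * esym F j y"
    unfolding esym_def by (rule sum_distrib_left[symmetric])
  show ?thesis using s1 s2 s3 s4 by linarith
qed

lemma esym_0: "finite V \<Longrightarrow> esym V 0 y = 1"
proof -
  assume "finite V"
  then have "{J. J \<subseteq> V \<and> card J = 0} = {{}}"
  proof (intro set_eqI iffI)
    fix J assume "J \<in> {J. J \<subseteq> V \<and> card J = 0}"
    then have "finite J" "card J = 0" using finite_subset \<open>finite V\<close> by auto
    then show "J \<in> {{}}" by simp
  qed auto
  then show ?thesis by (simp add: esym_def)
qed

lemma maclaurin_step:
  fixes a t :: real and n j :: nat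
  assumes "a \<ge> 0" "t \<ge> 0"
  shows "real (n choose Suc j) * a ^ Suc j + t * (real (n choose j) * a ^ j)
     \<le> real (Suc n choose Suc j) * ((real n * a + t) / real (Suc n)) ^ Suc j"
proof -
  define N where "N = real (Suc n)"
  define h where "h = (t - a) / N"
  have N0: "N > 0" by (simp add: N_def)
  have bh: "a + h = (real n * a + t) / real (Suc n)"
    using N0 by (simp add: h_def N_def field_simps)
  have "a + h \<ge> 0" using assms bh by simp
  then have T: "a ^ j * (a + real (Suc j) * h) \<le> (a + h) ^ Suc j"
    using tangent_pow assms(1) by blast
  define B where "B = real (Suc n choose Suc j)"
  define c0 where "c0 = real (n choose j)"
  define c1 where "c1 = real (n choose Suc j)"
  have B1: "B = c1 + c0" by (simp add: B_def c0_def c1_def)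
  have B2: "real (Suc j) * B = N * c0"
  proof -
    have e: "Suc n * (n choose j) = (Suc n choose Suc j) * Suc j" by (rule Suc_times_binomial_eq)
    have "real (Suc n) * real (n choose j) = real (Suc n choose Suc j) * real (Suc j)"
      using arg_cong[OF e, of real] by (simp only: of_nat_mult)
    then show ?thesis unfolding B_def N_def c0_def by (metis mult.commute)
  qed
  have Nh: "N * h = t - a" using N0 by (simp add: h_def)
  have "B * (a ^ j * (a + real (Suc j) * h)) = B * a ^ Suc j + a ^ j * ((real (Suc j) * B) * h)"
    by (simp add: algebra_simps)
  also have "\<dots> = B * a ^ Suc j + a ^ j * (c0 * (N * h))"
    by (subst B2) (simp add: mult_ac)
  also have "\<dots> = B * a ^ Suc j + a ^ j * (c0 * (t - a))"
    by (simp only: Nh)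
  also have "\<dots> = c1 * a ^ Suc j + t * (c0 * a ^ j)"
    by (simp add: B1 algebra_simps)
  finally have "B * (a ^ j * (a + real (Suc j) * h)) = c1 * a ^ Suc j + t * (c0 * a ^ j)" .
  moreover have "B * (a ^ j * (a + real (Suc j) * h)) \<le> B * (a + h) ^ Suc j"
    by (intro mult_left_mono T) (simp add: B_def)
  ultimately have "c1 * a ^ Suc j + t * (c0 * a ^ j) \<le> B * (a + h) ^ Suc j" by linarith
  then show ?thesis unfolding B_def c0_def c1_def bh .
qed

lemma maclaurin:
  assumes "finite V" "\<And>i. i \<in> V \<Longrightarrow> y i \<ge> 0"
  shows "esym V k y \<le> real (card V choose k) * (sum y V / real (card V)) ^ k"
  using assms
proof (induction V arbitrary: k rule: finite_induct)
  case empty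
  then show ?case by (cases k) (simp add: esym_0, simp add: esym_def)
next
  case (insert v F)
  show ?case
  proof (cases k)
    case 0 then show ?thesis using insert by (simp add: esym_0)
  next
    case (Suc j)
    define a where "a = sum y F / real (card F)"
    have a0: "a \<ge> 0" using insert by (simp add: a_def sum_nonneg)
    have sF: "sum y F = real (card F) * a"
      by (cases "card F = 0") (use insert in \<open>simp_all add: a_def\<close>)
    have yv: "y v \<ge> 0" using insert by simp
    have IH1: "esym F (Suc j) y \<le> real (card F choose Suc j) * a ^ Suc j"
      unfolding a_def by (rule insert.IH) (use insert.prems in auto)
    have IH2: "esym F j y \<le> real (card F choose j) * a ^ j"
      unfolding a_def by (rule insert.IH) (use insert.prems in auto)
    have "esym (insert v F) k y = esym F (Suc j) y + y v * esym F j y"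
      using insert.hyps Suc by (simp add: esym_insert)
    also have "\<dots> \<le> real (card F choose Suc j) * a ^ Suc j + y v * (real (card F choose j) * a ^ j)"
      by (intro add_mono mult_left_mono yv IH1 IH2)
    also have "\<dots> \<le> real (Suc (card F) choose Suc j) * ((real (card F) * a + y v) / real (Suc (card F))) ^ Suc j"
      by (rule maclaurin_step[OF a0 yv])
    also have "\<dots> = real (card (insert v F) choose k) * (sum y (insert v F) / real (card (insert v F))) ^ k"
      using insert.hyps Suc sF by (simp add: add.commute)
    finally show ?thesis .
  qed
qed




lemma copies_le_fact:
  fixes EQ :: "nat set set"
  assumes "finite I" "card I = s" "is_rgraph r {..<s} EQ"
  shows "num_copies s EQ I E \<le> fact s"
proof -
  let ?S = "{(V', E'). V' \<subseteq> I \<and> E' \<subseteq> E \<and> (\<forall>e\<in>E'. e \<subseteq> V') \<and>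
      (\<exists>f. bij_betw f {..<s} V' \<and> E' = (\<lambda>e. f ` e) ` EQ)}"
  let ?F = "{f \<in> {..<s} \<rightarrow>\<^sub>E I. inj_on f {..<s}}"
  have sub: "?S \<subseteq> (\<lambda>f. (I, (\<lambda>e. f ` e) ` EQ)) ` ?F"
  proof
    fix z assume zS: "z \<in> ?S"
    obtain V' E' where zz: "z = (V', E')" by (cases z)
    have hz: "V' \<subseteq> I \<and> E' \<subseteq> E \<and> (\<forall>e\<in>E'. e \<subseteq> V') \<and>
      (\<exists>f. bij_betw f {..<s} V' \<and> E' = (\<lambda>e. f ` e) ` EQ)"
      using zS unfolding zz mem_Collect_eq prod.case by assumption
    have h1: "V' \<subseteq> I" using hz by (rule conjunct1)
    have h2: "\<exists>f. bij_betw f {..<s} V' \<and> E' = (\<lambda>e. f ` e) ` EQ"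
      using hz[THEN conjunct2, THEN conjunct2, THEN conjunct2] .
    from h2 obtain f where f: "bij_betw f {..<s} V' \<and> E' = (\<lambda>e. f ` e) ` EQ" ..
    have z: "z = (V', E')" "V' \<subseteq> I" "bij_betw f {..<s} V'" "E' = (\<lambda>e. f ` e) ` EQ"
      using zz h1 f by simp_all
    have "card {..<s} = card V'" by (rule bij_betw_same_card[OF z(3)])
    then have cV: "card V' = card I" using assms(2) by simp
    have VI: "V' = I" by (rule card_subset_eq[OF assms(1) z(2) cV])
    define g where "g = restrict f {..<s}"
    have "g \<in> ?F" using z(3) VI unfolding g_def bij_betw_def by auto
    moreover have "(\<lambda>e. g ` e) ` EQ = (\<lambda>e. f ` e) ` EQ"
    proof -
      have "\<And>e. e \<in> EQ \<Longrightarrow> g ` e = f ` e"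
        using assms(3) unfolding is_rgraph_def g_def by (auto simp: restrict_def)
      then show ?thesis by (metis (no_types, lifting) image_cong)
    qed
    ultimately show "z \<in> (\<lambda>f. (I, (\<lambda>e. f ` e) ` EQ)) ` ?F" using z VI by (intro image_eqI[where x=g]) auto
  qed
  have finF: "finite ?F" using assms by (simp add: finite_PiE)
  have "card ?S \<le> card ((\<lambda>f. (I, (\<lambda>e. f ` e) ` EQ)) ` ?F)"
    by (rule card_mono[OF finite_imageI[OF finF] sub])
  also have "\<dots> \<le> card ?F" by (rule card_image_le[OF finF])
  also have "card ?F = card I ^ (card {..<s} - card {..<s}) * prod ((-) (card I)) {0..<card {..<s}}"
    by (rule card_inj_on_subset_funcset) (use assms in auto)
  also have "\<dots> = prod ((-) s) {0..<s}" using assms by simp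
  also have "\<dots> = fact s"
  proof -
    have "prod ((-) s) {0..<s} = prod (\<lambda>i. i) {1..s}"
      by (rule prod.reindex_bij_witness[where i="\<lambda>i. s - i" and j="\<lambda>i. s - i"]) auto
    then show ?thesis by (simp add: fact_prod)
  qed
  finally show ?thesis unfolding num_copies_def .
qed




lemma pnorm_sum_one:
  assumes "pnorm p n x = 1" "p > 0"
  shows "(\<Sum>i<n. \<bar>x i\<bar> powr p) = 1"
proof -
  define S where "S = (\<Sum>i<n. \<bar>x i\<bar> powr p)"
  have S0: "S \<ge> 0" unfolding S_def by (simp add: sum_nonneg)
  have e: "S powr (1 / p) = 1" using assms(1) unfolding pnorm_def S_def .
  have "S \<noteq> 0" using e by auto
  have "S = S powr ((1 / p) * p)" using assms(2) S0 \<open>S \<noteq> 0\<close> by simp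
  also have "\<dots> = (S powr (1 / p)) powr p" by (simp add: powr_powr)
  also have "\<dots> = 1" using e by simp
  finally show ?thesis unfolding S_def .
qed

lemma pnorm_scale:
  assumes "p > 0" "(\<Sum>i<n. \<bar>y i\<bar> powr p) > 0"
  shows "pnorm p n (\<lambda>i. y i / ((\<Sum>i<n. \<bar>y i\<bar> powr p) powr (1 / p))) = 1"
proof -
  define S where "S = (\<Sum>i<n. \<bar>y i\<bar> powr p)"
  define \<nu> where "\<nu> = S powr (1 / p)"
  have S0: "S > 0" using assms S_def by simp
  have nu0: "\<nu> > 0" using S0 by (simp add: \<nu>_def)
  have nup: "\<nu> powr p = S" using S0 assms(1) by (simp add: \<nu>_def powr_powr)
  have "(\<Sum>i<n. \<bar>y i / \<nu>\<bar> powr p) = (\<Sum>i<n. \<bar>y i\<bar> powr p / S)"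
  proof (rule sum.cong)
    fix i
    have "\<bar>y i / \<nu>\<bar> = \<bar>y i\<bar> / \<nu>" using nu0 by simp
    then have "\<bar>y i / \<nu>\<bar> powr p = (\<bar>y i\<bar> / \<nu>) powr p" by (rule arg_cong)
    also have "\<dots> = \<bar>y i\<bar> powr p / \<nu> powr p" by (rule powr_divide)
    finally show "\<bar>y i / \<nu>\<bar> powr p = \<bar>y i\<bar> powr p / S" by (simp only: nup)
  qed (rule refl)
  also have "\<dots> = 1" using S0 by (simp add: S_def flip: sum_divide_distrib)
  finally show ?thesis unfolding pnorm_def S_def[symmetric] \<nu>_def[symmetric] by simp
qed

lemma Qpoly_scale:
  fixes EQ EH :: "nat set set"
  assumes "\<nu> \<noteq> 0"
  shows "Qpoly s EQ n EH (\<lambda>i. y i / \<nu>) = Qpoly s EQ n EH y / \<nu> ^ s"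
proof -
  have "(\<Sum>I\<in>{I. I \<subseteq> {..<n} \<and> card I = s}. real (num_copies s EQ I (induced_edges EH I)) * (\<Prod>i\<in>I. y i / \<nu>))
     = (\<Sum>I\<in>{I. I \<subseteq> {..<n} \<and> card I = s}. real (num_copies s EQ I (induced_edges EH I)) * (\<Prod>i\<in>I. y i) / \<nu> ^ s)"
  proof (rule sum.cong)
    fix I assume "I \<in> {I. I \<subseteq> {..<n} \<and> card I = s}"
    then have "card I = s" by simp
    then show "real (num_copies s EQ I (induced_edges EH I)) * (\<Prod>i\<in>I. y i / \<nu>) =
      real (num_copies s EQ I (induced_edges EH I)) * (\<Prod>i\<in>I. y i) / \<nu> ^ s"
      by (simp add: prod_dividef)
  qed (rule refl)
  then show ?thesis unfolding Qpoly_def by (simp flip: sum_divide_distrib)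
qed

lemma Qpoly_bdd:
  fixes EQ EH :: "nat set set"
  assumes "p > 0"
  shows "bdd_above ((Qpoly s EQ n EH) ` {y. pnorm p n y = 1})"
proof (rule bdd_aboveI2)
  fix y assume "y \<in> {y. pnorm p n y = 1}"
  then have s1: "(\<Sum>i<n. \<bar>y i\<bar> powr p) = 1" using pnorm_sum_one assms by auto
  have yle: "\<bar>y i\<bar> \<le> 1" if "i < n" for i
  proof (rule ccontr)
    assume "\<not> \<bar>y i\<bar> \<le> 1"
    then have "1 < \<bar>y i\<bar>" by simp
    then have "1 powr p < \<bar>y i\<bar> powr p" using assms by (intro powr_less_mono2) auto
    moreover have "\<bar>y i\<bar> powr p \<le> (\<Sum>i<n. \<bar>y i\<bar> powr p)"
      by (rule member_le_sum) (use that in auto)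
    ultimately show False using s1 by simp
  qed
  have "Qpoly s EQ n EH y \<le> fact s * (\<Sum>I\<in>{I. I \<subseteq> {..<n} \<and> card I = s}. real (num_copies s EQ I (induced_edges EH I)))"
    unfolding Qpoly_def
  proof (intro mult_left_mono sum_mono)
    fix I assume I: "I \<in> {I. I \<subseteq> {..<n} \<and> card I = s}"
    have "(\<Prod>i\<in>I. y i) \<le> \<bar>\<Prod>i\<in>I. y i\<bar>" by simp
    also have "\<dots> = (\<Prod>i\<in>I. \<bar>y i\<bar>)" by (rule abs_prod)
    also have "\<dots> \<le> 1" by (rule prod_le_1) (use I yle in auto)
    finally have "(\<Prod>i\<in>I. y i) \<le> 1" .
    then show "real (num_copies s EQ I (induced_edges EH I)) * (\<Prod>i\<in>I. y i) \<le> real (num_copies s EQ I (induced_edges EH I))"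
      using mult_left_mono[of "(\<Prod>i\<in>I. y i)" 1 "real (num_copies s EQ I (induced_edges EH I))"] by simp
  qed simp
  then show "Qpoly s EQ n EH y \<le> fact s * (\<Sum>I\<in>{I. I \<subseteq> {..<n} \<and> card I = s}. real (num_copies s EQ I (induced_edges EH I)))" .
qed

lemma Qpoly_split:
  fixes x :: "nat \<Rightarrow> real" and EQ EH :: "nat set set"
  shows "Qpoly s EQ n EH (x(u := t)) = fact s *
     ((\<Sum>I\<in>{I. I \<subseteq> {..<n} \<and> card I = s \<and> u \<notin> I}. real (num_copies s EQ I (induced_edges EH I)) * (\<Prod>i\<in>I. x i))
      + t * (\<Sum>I\<in>{I. I \<subseteq> {..<n} \<and> card I = s \<and> u \<in> I}. real (num_copies s EQ I (induced_edges EH I)) * (\<Prod>i\<in>I - {u}. x i)))"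
proof -
  define c where "c = (\<lambda>I. real (num_copies s EQ I (induced_edges EH I)))"
  define Is where "Is = {I. I \<subseteq> {..<n} \<and> card I = s}"
  have fin: "finite Is" unfolding Is_def by (rule finite_subset[of _ "Pow {..<n}"]) auto
  have "(\<Sum>I\<in>Is. c I * (\<Prod>i\<in>I. (x(u := t)) i)) =
      (\<Sum>I\<in>Is. if u \<in> I then t * (c I * (\<Prod>i\<in>I - {u}. x i)) else c I * (\<Prod>i\<in>I. x i))"
  proof (rule sum.cong)
    fix I assume "I \<in> Is"
    then have fI: "finite I" unfolding Is_def using finite_subset by blast
    show "c I * (\<Prod>i\<in>I. (x(u := t)) i) =
      (if u \<in> I then t * (c I * (\<Prod>i\<in>I - {u}. x i)) else c I * (\<Prod>i\<in>I. x i))"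
    proof (cases "u \<in> I")
      case True
      have "(\<Prod>i\<in>I. (x(u := t)) i) = (x(u := t)) u * (\<Prod>i\<in>I - {u}. (x(u := t)) i)"
        by (rule prod.remove[OF fI True])
      also have "(\<Prod>i\<in>I - {u}. (x(u := t)) i) = (\<Prod>i\<in>I - {u}. x i)"
        by (rule prod.cong) auto
      finally show ?thesis using True by simp
    next
      case False
      have "(\<Prod>i\<in>I. (x(u := t)) i) = (\<Prod>i\<in>I. x i)"
        by (rule prod.cong) (use False in auto)
      then show ?thesis using False by simp
    qed
  qed (rule refl)
  also have "\<dots> = (\<Sum>I\<in>Is \<inter> {I. u \<in> I}. t * (c I * (\<Prod>i\<in>I - {u}. x i))) +
      (\<Sum>I\<in>Is \<inter> - {I. u \<in> I}. c I * (\<Prod>i\<in>I. x i))"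
    by (rule sum.If_cases[OF fin])
  also have "Is \<inter> {I. u \<in> I} = {I. I \<subseteq> {..<n} \<and> card I = s \<and> u \<in> I}" unfolding Is_def by blast
  also have "Is \<inter> - {I. u \<in> I} = {I. I \<subseteq> {..<n} \<and> card I = s \<and> u \<notin> I}" unfolding Is_def by blast
  finally show ?thesis unfolding Qpoly_def Is_def c_def by (simp add: sum_distrib_left algebra_simps)
qed




lemma alg_final:
  fixes d1 d F Cn N M :: real
  shows "d1 * (F * Cn / N - (F * Cn - d) * M) = F * Cn * d1 / N - (F * Cn * d1 - d1 * d) * M"
  by (simp add: algebra_simps)

theorem lemma3p6:
  fixes p :: real and r s n :: nat and EQ EH :: "nat set set" and x :: "nat \<Rightarrow> real"
  assumes "p > 1" and "2 \<le> r" and "r \<le> s" and "s \<le> n"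
    and "is_rgraph r {..<s} EQ" and "is_rgraph r {..<n} EH"
    and "principal_Qeigvec p s EQ n EH x"
  shows "(Qlambda p s EQ n EH * (Min (x ` {..<n})) powr (p - 1) / fact (s - 1)) powr p
     \<le> fact s * real (n choose (s - 1)) * real (min_Qdegree s EQ n EH) powr (p - 1) / real n ^ (s - 1)
        - (fact s * real (n choose (s - 1)) * real (min_Qdegree s EQ n EH) powr (p - 1)
           - real (min_Qdegree s EQ n EH) powr p) * (Min (x ` {..<n})) powr (p * (real s - 1))"
proof -
  have p1: "p > 1" using assms(1) .
  have s2: "2 \<le> s" using assms(2,3) by linarith
  have n2: "2 \<le> n" using s2 assms(4) by linarith
  have x0: "\<And>i. i < n \<Longrightarrow> 0 \<le> x i" and pn: "pnorm p n x = 1"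
    and Qx: "Qpoly s EQ n EH x = Qlambda p s EQ n EH"
    using assms(7) unfolding principal_Qeigvec_def by auto
  define lam where "lam = Qlambda p s EQ n EH"
  define m where "m = Min (x ` {..<n})"
  define dl where "dl = min_Qdegree s EQ n EH"
  define c where "c = (\<lambda>I. real (num_copies s EQ I (induced_edges EH I)))"
  define Is where "Is = {I. I \<subseteq> {..<n} \<and> card I = s}"
  have finIs: "finite Is" unfolding Is_def by (rule finite_subset[of _ "Pow {..<n}"]) auto
  have c0: "\<And>I. 0 \<le> c I" by (simp add: c_def)
  have cle: "c I \<le> fact s" if "I \<in> Is" for I
  proof -
    have fI: "finite I" "card I = s" using that finite_subset unfolding Is_def by auto
    have "num_copies s EQ I (induced_edges EH I) \<le> fact s"
      by (rule copies_le_fact[OF fI assms(5)])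
    then have "real (num_copies s EQ I (induced_edges EH I)) \<le> real (fact s)" by (rule of_nat_mono)
    then show ?thesis by (simp add: c_def)
  qed
  have finD: "finite (Qdegree s EQ n EH ` {..<n})" by simp
  have n0: "(0::nat) \<in> {..<n}" using n2 by simp
  have neD: "Qdegree s EQ n EH ` {..<n} \<noteq> {}" using n0 by blast
  obtain u where u: "u < n" "Qdegree s EQ n EH u = dl"
    using Min_in[OF finD neD] unfolding dl_def min_Qdegree_def by auto
  have finX: "finite (x ` {..<n})" by simp
  have neX: "x ` {..<n} \<noteq> {}" using n0 by blast
  have mx: "\<And>i. i < n \<Longrightarrow> m \<le> x i" unfolding m_def using Min_le[OF finX] by simp
  have m0: "0 \<le> m"
  proof -
    obtain i where "i < n" "m = x i" using Min_in[OF finX neX] unfolding m_def by auto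
    then show ?thesis using x0 by simp
  qed
  have Qdef: "Qpoly s EQ n EH y = fact s * (\<Sum>I\<in>Is. c I * (\<Prod>i\<in>I. y i))" for y
    unfolding Qpoly_def Is_def c_def ..
  have lam0: "0 \<le> lam"
  proof -
    have "0 \<le> fact s * (\<Sum>I\<in>Is. c I * (\<Prod>i\<in>I. x i))"
    proof (rule mult_nonneg_nonneg[OF _ sum_nonneg])
      fix I assume "I \<in> Is"
      then have "\<And>i. i \<in> I \<Longrightarrow> 0 \<le> x i" using x0 unfolding Is_def by auto
      then show "0 \<le> c I * (\<Prod>i\<in>I. x i)" using c0 by (simp add: prod_nonneg)
    qed simp
    then show ?thesis using Qx Qdef[of x] by (simp add: lam_def)
  qed
  define Iu where "Iu = {I. I \<subseteq> {..<n} \<and> card I = s \<and> u \<in> I}"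
  define Inu where "Inu = {I. I \<subseteq> {..<n} \<and> card I = s \<and> u \<notin> I}"
  have finIu: "finite Iu" unfolding Iu_def by (rule finite_subset[of _ "Pow {..<n}"]) auto
  define D where "D = (\<Sum>I\<in>Iu. c I * (\<Prod>i\<in>I - {u}. x i))"
  define A0 where "A0 = (\<Sum>I\<in>Inu. c I * (\<Prod>i\<in>I. x i))"
  have split: "Qpoly s EQ n EH (x(u := t)) = fact s * (A0 + t * D)" for t
    unfolding A0_def D_def Iu_def Inu_def c_def by (rule Qpoly_split)
  have deg: "real dl = (\<Sum>I\<in>Iu. c I)"
    unfolding u(2)[symmetric] Qdegree_def Iu_def c_def by (simp add: of_nat_sum)
  have main: "(lam * m powr (p - 1) / fact (s - 1)) powr p
     \<le> fact s * real (n choose (s - 1)) * real dl powr (p - 1) / real n ^ (s - 1)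
        - (fact s * real (n choose (s - 1)) * real dl powr (p - 1)
           - real dl powr p) * m powr (p * (real s - 1))"
  proof (cases "m = 0")
    case True
    have "0 \<le> fact s * real (n choose (s - 1)) * real dl powr (p - 1) / real n ^ (s - 1)" by simp
    then show ?thesis using True by simp
  next
    case False
    then have mpos: "m > 0" using m0 by simp
    have xu: "x u > 0" using mx[OF u(1)] mpos by simp

    have sum1: "(\<Sum>i<n. \<bar>x i\<bar> powr p) = 1" using pnorm_sum_one[OF pn] p1 by simp
    define R where "R = (\<Sum>i\<in>{..<n} - {u}. \<bar>x i\<bar> powr p)"
    have R0: "R \<ge> 0" unfolding R_def by (simp add: sum_nonneg)
    have normW: "(\<Sum>i<n. \<bar>(x(u := t)) i\<bar> powr p) = \<bar>t\<bar> powr p + R" for t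
    proof -
      have "(\<Sum>i<n. \<bar>(x(u := t)) i\<bar> powr p) = \<bar>(x(u := t)) u\<bar> powr p + (\<Sum>i\<in>{..<n} - {u}. \<bar>(x(u := t)) i\<bar> powr p)"
        by (rule sum.remove) (use u(1) in auto)
      also have "(\<Sum>i\<in>{..<n} - {u}. \<bar>(x(u := t)) i\<bar> powr p) = R"
        unfolding R_def by (rule sum.cong) auto
      finally show ?thesis by simp
    qed
    have R1: "R + x u powr p = 1"
      using normW[of "x u"] sum1 xu by simp
    have maxW: "fact s * (A0 + t * D) \<le> lam * (R + t powr p) powr (real s / p)" if t0: "t > 0" for t
    proof -
      define S where "S = R + t powr p"
      have S0: "S > 0" using R0 t0 by (simp add: S_def add_nonneg_pos)
      have Sn: "(\<Sum>i<n. \<bar>(x(u := t)) i\<bar> powr p) = S" using normW[of t] t0 by (simp add: S_def)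
      define \<nu> where "\<nu> = S powr (1 / p)"
      have nu0: "\<nu> > 0" using S0 by (simp add: \<nu>_def)
      have pz: "pnorm p n (\<lambda>i. (x(u := t)) i / \<nu>) = 1"
        using pnorm_scale[where p=p and n=n and y="x(u := t)"] p1 S0 Sn by (simp add: \<nu>_def)
      have "Qpoly s EQ n EH (\<lambda>i. (x(u := t)) i / \<nu>) \<le> lam"
        unfolding lam_def Qlambda_def
        by (rule cSUP_upper) (use pz Qpoly_bdd[of p s EQ n EH] p1 in auto)
      then have "Qpoly s EQ n EH (x(u := t)) / \<nu> ^ s \<le> lam"
        using Qpoly_scale[of \<nu> s EQ n EH "x(u := t)"] nu0 by simp
      then have "Qpoly s EQ n EH (x(u := t)) \<le> lam * \<nu> ^ s"
        using nu0 by (simp add: pos_divide_le_eq)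
      moreover have "\<nu> ^ s = S powr (real s / p)"
      proof -
        have "\<nu> ^ s = \<nu> powr real s" using nu0 by (simp add: powr_realpow)
        also have "\<dots> = S powr (1 / p * real s)" by (simp add: \<nu>_def powr_powr)
        finally show ?thesis by simp
      qed
      ultimately show ?thesis using split[of t] by (simp add: S_def)
    qed
    define G where "G = (\<lambda>t. lam * (R + t powr p) powr (real s / p) - fact s * (A0 + t * D))"
    have Gxu: "G (x u) = 0"
    proof -
      have "fact s * (A0 + x u * D) = lam" using split[of "x u"] Qx by (simp add: lam_def)
      then show ?thesis using R1 by (simp add: G_def)
    qed
    have Gpos: "0 \<le> G t" if "t > 0" for t using maxW[OF that] by (simp add: G_def)
    have d1: "((\<lambda>t. t powr p) has_real_derivative p * x u powr (p - 1)) (at (x u))"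
      by (rule has_real_derivative_powr[OF xu])
    have d2: "((\<lambda>t. R + t powr p) has_real_derivative 0 + p * x u powr (p - 1)) (at (x u))"
      by (rule DERIV_add[OF DERIV_const d1])
    have d3: "((\<lambda>t. (R + t powr p) powr (real s / p)) has_real_derivative
        real s / p * (R + x u powr p) powr (real s / p - of_nat 1) * (0 + p * x u powr (p - 1))) (at (x u))"
      by (rule DERIV_fun_powr[OF d2]) (use R0 xu in \<open>simp add: add_nonneg_pos\<close>)
    have d4: "((\<lambda>t. lam * (R + t powr p) powr (real s / p)) has_real_derivative
        lam * (real s / p * (R + x u powr p) powr (real s / p - of_nat 1) * (0 + p * x u powr (p - 1)))) (at (x u))"
      by (rule DERIV_cmult[OF d3])
    have d5: "((\<lambda>t. fact s * (A0 + t * D)) has_real_derivative fact s * (0 + 1 * D)) (at (x u))"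
      by (rule DERIV_cmult[OF DERIV_add[OF DERIV_const DERIV_cmult_right[OF DERIV_ident]]])
    have dG: "(G has_real_derivative
        lam * (real s / p * (R + x u powr p) powr (real s / p - of_nat 1) * (0 + p * x u powr (p - 1))) - fact s * (0 + 1 * D)) (at (x u))"
      unfolding G_def by (rule DERIV_diff[OF d4 d5])
    have "lam * (real s / p * (R + x u powr p) powr (real s / p - of_nat 1) * (0 + p * x u powr (p - 1))) - fact s * (0 + 1 * D) = 0"
    proof (rule DERIV_local_min[OF dG xu], intro allI impI)
      fix y assume "\<bar>x u - y\<bar> < x u"
      then have "y > 0" by simp
      then show "G (x u) \<le> G y" using Gpos Gxu by simp
    qed
    then have "lam * (real s / p * (p * x u powr (p - 1))) = fact s * D" using R1 by simp
    then have eq1: "lam * real s * x u powr (p - 1) = fact s * D" using p1 by (simp add: field_simps)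
    have fs: "fact s = real s * fact (s - 1)" using s2 by (simp add: fact_reduce)
    have eig: "lam * x u powr (p - 1) / fact (s - 1) = D"
    proof -
      have "real s * (lam * x u powr (p - 1)) = real s * (fact (s - 1) * D)"
        using eq1 fs by (simp add: mult_ac)
      then have "lam * x u powr (p - 1) = fact (s - 1) * D" using s2 by simp
      then show ?thesis by (simp add: field_simps)
    qed
    define E where "E = (\<Sum>I\<in>Iu. c I * (\<Prod>i\<in>I - {u}. x i) powr p)"
    have holder: "D powr p \<le> real dl powr (p - 1) * E"
      unfolding D_def E_def deg
    proof (rule power_mean[OF finIu p1])
      fix I assume "I \<in> Iu"
      then have "\<And>i. i \<in> I - {u} \<Longrightarrow> 0 \<le> x i" using x0 unfolding Iu_def by auto
      then show "0 \<le> (\<Prod>i\<in>I - {u}. x i)" by (intro prod_nonneg) auto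
    qed (rule c0)
    define y where "y = (\<lambda>i. x i powr p)"
    define mp where "mp = m powr p"
    define Wn where "Wn = {..<n} - {u}"
    define M where "M = mp ^ (s - 1)"
    have mp0: "mp > 0" using mpos by (simp add: mp_def)
    have ymp: "mp \<le> y i" if "i < n" for i
      unfolding mp_def y_def by (rule powr_mono2) (use p1 m0 mx[OF that] in auto)
    have y0: "0 \<le> y i" for i by (simp add: y_def)
    have finWn: "finite Wn" by (simp add: Wn_def)
    have cardWn: "card Wn = n - 1" using u(1) by (simp add: Wn_def)
    define P where "P = (\<lambda>I. \<Prod>i\<in>I - {u}. y i)"
    have EP: "E = (\<Sum>I\<in>Iu. c I * P I)"
      unfolding E_def P_def y_def by (simp add: prod_powr_distrib)
    have prod_low: "mp ^ k \<le> (\<Prod>i\<in>J. y i)" if "J \<subseteq> {..<n}" "card J = k" for J k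
    proof -
      have "(\<Prod>i\<in>J. mp) \<le> (\<Prod>i\<in>J. y i)"
        by (rule prod_mono) (use that ymp mp0 in auto)
      then show ?thesis using that by simp
    qed
    have Pge: "M \<le> P I" if "I \<in> Iu" for I
    proof -
      have fI: "finite I" using that finite_subset unfolding Iu_def by auto
      have "card (I - {u}) = s - 1" using that fI unfolding Iu_def by simp
      moreover have "I - {u} \<subseteq> {..<n}" using that unfolding Iu_def by auto
      ultimately show ?thesis unfolding M_def P_def by (intro prod_low) auto
    qed
    define Sub where "Sub = (\<lambda>k. {J. J \<subseteq> Wn \<and> card J = k})"
    have bij: "bij_betw (\<lambda>I. I - {u}) Iu (Sub (s - 1))"
    proof (rule bij_betw_byWitness[where f'="insert u"])
      show "\<forall>a\<in>Iu. insert u (a - {u}) = a" unfolding Iu_def by auto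
      show "\<forall>a'\<in>Sub (s - 1). insert u a' - {u} = a'" unfolding Sub_def Wn_def by auto
      show "(\<lambda>I. I - {u}) ` Iu \<subseteq> Sub (s - 1)"
      proof
        fix J assume "J \<in> (\<lambda>I. I - {u}) ` Iu"
        then obtain I where I: "I \<in> Iu" "J = I - {u}" by blast
        have fI: "finite I" using I finite_subset unfolding Iu_def by auto
        show "J \<in> Sub (s - 1)" using I fI unfolding Iu_def Sub_def Wn_def by auto
      qed
      show "insert u ` Sub (s - 1) \<subseteq> Iu"
      proof
        fix I assume "I \<in> insert u ` Sub (s - 1)"
        then obtain J where J: "J \<in> Sub (s - 1)" "I = insert u J" by blast
        have fJ: "finite J" "u \<notin> J" "J \<subseteq> {..<n}" using J finite_subset finWn unfolding Sub_def Wn_def by auto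
        have "card I = Suc (s - 1)" using J fJ unfolding Sub_def by simp
        then have "card I = s" using s2 by simp
        then show "I \<in> Iu" using J fJ u(1) unfolding Iu_def by auto
      qed
    qed
    have cardIu: "card Iu = (n - 1) choose (s - 1)"
      using bij_betw_same_card[OF bij] n_subsets[OF finWn, of "s - 1"] cardWn unfolding Sub_def by simp
    have sumP: "(\<Sum>I\<in>Iu. P I) = esym Wn (s - 1) y"
    proof -
      have "(\<Sum>I\<in>Iu. P I) = (\<Sum>I\<in>Iu. (\<lambda>J. \<Prod>i\<in>J. y i) (I - {u}))" unfolding P_def by simp
      also have "\<dots> = (\<Sum>J\<in>Sub (s - 1). \<Prod>i\<in>J. y i)" by (rule sum.reindex_bij_betw[OF bij])
      finally show ?thesis unfolding esym_def Sub_def .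
    qed
    have esplit: "esym {..<n} (s - 1) y = esym Wn (s - 1) y + y u * esym Wn (s - 2) y"
    proof -
      have "{..<n} = insert u Wn" using u(1) unfolding Wn_def by auto
      moreover have "s - 1 = Suc (s - 2)" using s2 by simp
      ultimately show ?thesis using esym_insert[OF finWn, of u "s - 2" y] by (simp add: Wn_def)
    qed
    have sumy: "sum y {..<n} = 1"
    proof -
      have "sum y {..<n} = (\<Sum>i<n. \<bar>x i\<bar> powr p)" unfolding y_def by (rule sum.cong) (use x0 in auto)
      then show ?thesis using sum1 by simp
    qed
    have mac: "esym {..<n} (s - 1) y \<le> real (n choose (s - 1)) / real n ^ (s - 1)"
      using maclaurin[of "{..<n}" y "s - 1"] y0 sumy by (simp add: power_one_over)
    have low: "real ((n - 1) choose (s - 2)) * mp ^ (s - 2) \<le> esym Wn (s - 2) y"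
    proof -
      have "real (card (Sub (s - 2))) * mp ^ (s - 2) \<le> (\<Sum>J\<in>Sub (s - 2). \<Prod>i\<in>J. y i)"
      proof (rule sum_bounded_below)
        fix J assume "J \<in> Sub (s - 2)"
        then show "mp ^ (s - 2) \<le> (\<Prod>i\<in>J. y i)" unfolding Sub_def Wn_def by (intro prod_low) auto
      qed
      moreover have "card (Sub (s - 2)) = (n - 1) choose (s - 2)"
        unfolding Sub_def using n_subsets[OF finWn] cardWn by simp
      ultimately show ?thesis unfolding esym_def Sub_def by simp
    qed
    have low2: "real ((n - 1) choose (s - 2)) * M \<le> y u * esym Wn (s - 2) y"
    proof -
      have "mp * (real ((n - 1) choose (s - 2)) * mp ^ (s - 2)) \<le> y u * esym Wn (s - 2) y"
        by (rule mult_mono[OF ymp[OF u(1)] low]) (use mp0 y0 in auto)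
      moreover have "mp * (real ((n - 1) choose (s - 2)) * mp ^ (s - 2)) = real ((n - 1) choose (s - 2)) * M"
      proof -
        have "s - 1 = Suc (s - 2)" using s2 by simp
        then show ?thesis unfolding M_def by (simp add: mult_ac)
      qed
      ultimately show ?thesis by linarith
    qed
    have pascal: "real (n choose (s - 1)) = real ((n - 1) choose (s - 1)) + real ((n - 1) choose (s - 2))"
    proof -
      obtain n' where n': "n = Suc n'" using n2 by (cases n) auto
      obtain k where k: "s - 1 = Suc k" using s2 by (cases "s - 1") auto
      have k2: "s - 2 = k" using k by simp
      show ?thesis unfolding n' k k2 by simp
    qed
    have E1: "E \<le> fact s * esym Wn (s - 1) y - (fact s * real ((n - 1) choose (s - 1)) - real dl) * M"
    proof -
      have "(\<Sum>I\<in>Iu. (fact s - c I) * M) \<le> (\<Sum>I\<in>Iu. (fact s - c I) * P I)"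
      proof (rule sum_mono)
        fix I assume I: "I \<in> Iu"
        then have "I \<in> Is" unfolding Iu_def Is_def by auto
        then have "0 \<le> fact s - c I" using cle by simp
        then show "(fact s - c I) * M \<le> (fact s - c I) * P I" using Pge[OF I] by (rule mult_left_mono[rotated])
      qed
      moreover have "(\<Sum>I\<in>Iu. (fact s - c I) * M) = (fact s * real (card Iu) - real dl) * M"
        by (simp add: deg sum_subtractf left_diff_distrib sum_distrib_right)
      moreover have "(\<Sum>I\<in>Iu. (fact s - c I) * P I) = fact s * (\<Sum>I\<in>Iu. P I) - E"
        by (simp add: EP sum_subtractf left_diff_distrib sum_distrib_left)
      ultimately show ?thesis using cardIu sumP by simp
    qed
    have E2: "fact s * esym Wn (s - 1) y \<le> fact s * (real (n choose (s - 1)) / real n ^ (s - 1) - real ((n - 1) choose (s - 2)) * M)"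
      by (rule mult_left_mono) (use esplit mac low2 in auto)
    have Ebound: "E \<le> fact s * real (n choose (s - 1)) / real n ^ (s - 1) - (fact s * real (n choose (s - 1)) - real dl) * M"
    proof -
      have "fact s * real (n choose (s - 1)) * M = fact s * real ((n - 1) choose (s - 1)) * M + fact s * real ((n - 1) choose (s - 2)) * M"
        using pascal by (simp add: algebra_simps)
      then show ?thesis using E1 E2 by (simp add: algebra_simps)
    qed
    have pw: "real dl powr (p - 1) * real dl = real dl powr p" by (rule powr_minus_one_mult) simp
    have Mm: "m powr (p * (real s - 1)) = M"
    proof -
      have e: "p * (real s - 1) = p * real (s - 1)" using s2 by (simp add: of_nat_diff)
      have "m powr (p * (real s - 1)) = m powr (p * real (s - 1))" by (simp only: e)
      also have "\<dots> = (m powr p) powr real (s - 1)" by (rule powr_powr[symmetric])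
      also have "\<dots> = M" unfolding M_def using mp0 unfolding mp_def by (rule powr_realpow)
      finally show ?thesis .
    qed
    have "(lam * m powr (p - 1) / fact (s - 1)) powr p \<le> (lam * x u powr (p - 1) / fact (s - 1)) powr p"
    proof (rule powr_mono2)
      show "0 \<le> p" using p1 by simp
      show "0 \<le> lam * m powr (p - 1) / fact (s - 1)" using lam0 by simp
      have "m powr (p - 1) \<le> x u powr (p - 1)" by (rule powr_mono2) (use p1 m0 mx[OF u(1)] in auto)
      then show "lam * m powr (p - 1) / fact (s - 1) \<le> lam * x u powr (p - 1) / fact (s - 1)"
        using lam0 by (simp add: divide_right_mono mult_left_mono)
    qed
    also have "\<dots> = D powr p" using eig by simp
    also have "\<dots> \<le> real dl powr (p - 1) * E" by (rule holder)
    also have "\<dots> \<le> real dl powr (p - 1) * (fact s * real (n choose (s - 1)) / real n ^ (s - 1) - (fact s * real (n choose (s - 1)) - real dl) * M)"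
      by (rule mult_left_mono[OF Ebound]) simp
    also have "\<dots> = fact s * real (n choose (s - 1)) * real dl powr (p - 1) / real n ^ (s - 1)
        - (fact s * real (n choose (s - 1)) * real dl powr (p - 1) - real dl powr p) * M"
      by (simp only: alg_final pw)
    finally show ?thesis unfolding Mm .
  qed
  then show ?thesis unfolding lam_def m_def dl_def .
qed


end
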